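(* On $\mathbb{R}^3$ with coordinates $(x,y,z)$ (the universal cover of the isometry group $E(2)$ of the Euclidean plane, with its left-invariant structure), consider the Lorentzian metric $$g_1 = (\sin y\,dx + \cos y\,dz)^2 + dy^2 - (\cos y\,dx - \sin y\,dz)^2 .$$ Let $F_1 = \sin y\,\partial_x + \cos y\,\partial_z$, $F_2 = \partial_y$, $F_3 = \cos y\,\partial_x - \sin y\,\partial_z$, and let $$X = 2(z\cos y + x\sin y)\,F_1 + 2(x\cos y - z\sin y)\,F_3 .$$ Then $$2\,\mathrm{Ric}[g_1] + L_X g_1 - 4\,g_1 = 0 ,$$ and there is no smooth function $f$ on $\mathbb{R}^3$ with $X = \nabla f$ (gradient with respect to $g_1$). Hence $g_1$ is a shrinking non-gradient Lorentzian Ricci soliton.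
   Context: For a pseudo-Riemannian metric $g$ on a manifold $M$, a vector field $X$ and a constant $\alpha$, $(M,g,X,\alpha)$ is a Ricci soliton structure if $2\,\mathrm{Ric}[g] + L_X g + \alpha g = 0$, where $L_X$ denotes the Lie derivative. The soliton is called shrinking, steady, or expanding according as $\alpha<0$, $\alpha=0$, or $\alpha>0$. It is called gradient if $X=\nabla f$ for some function $f$, and non-gradient if $X\neq \nabla f$ for every function $f$. *)

theory Defs
  imports "HOL-Analysis.Analysis"
begin

text \<open>Coordinates on R^3: a point p :: real^3 has coordinates x = p$1, y = p$2, z = p$3.
  Tensor fields are given by their components in the coordinate frame
  (d/dx, d/dy, d/dz), indexed by the type 3.  A metric is a map
  g :: real^3 \<Rightarrow> 3 \<Rightarrow> 3 \<Rightarrow> real, a vector field a map X :: real^3 \<Rightarrow> real^3.\<close>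

definition partial :: "3 \<Rightarrow> (real^3 \<Rightarrow> real) \<Rightarrow> real^3 \<Rightarrow> real" where
  "partial i h p = deriv (\<lambda>t. h (p + t *\<^sub>R axis i 1)) 0"

definition inv_metric :: "(real^3 \<Rightarrow> 3 \<Rightarrow> 3 \<Rightarrow> real) \<Rightarrow> real^3 \<Rightarrow> 3 \<Rightarrow> 3 \<Rightarrow> real" where
  "inv_metric g p i j = matrix_inv (\<chi> a b. g p a b) $ i $ j"

definition christoffel :: "(real^3 \<Rightarrow> 3 \<Rightarrow> 3 \<Rightarrow> real) \<Rightarrow> 3 \<Rightarrow> 3 \<Rightarrow> 3 \<Rightarrow> real^3 \<Rightarrow> real" where
  "christoffel g k i j p = (1/2) * (\<Sum>l\<in>UNIV. inv_metric g p k l *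
      (partial i (\<lambda>q. g q j l) p + partial j (\<lambda>q. g q i l) p - partial l (\<lambda>q. g q i j) p))"

definition ricci :: "(real^3 \<Rightarrow> 3 \<Rightarrow> 3 \<Rightarrow> real) \<Rightarrow> 3 \<Rightarrow> 3 \<Rightarrow> real^3 \<Rightarrow> real" where
  "ricci g i j p =
     (\<Sum>k\<in>UNIV. partial k (christoffel g k i j) p - partial j (christoffel g k k i) p)
   + (\<Sum>k\<in>UNIV. \<Sum>l\<in>UNIV. christoffel g k k l p * christoffel g l i j p
                           - christoffel g k j l p * christoffel g l k i p)"

definition lie_deriv_metric :: "(real^3 \<Rightarrow> real^3) \<Rightarrow> (real^3 \<Rightarrow> 3 \<Rightarrow> 3 \<Rightarrow> real) \<Rightarrow> 3 \<Rightarrow> 3 \<Rightarrow> real^3 \<Rightarrow> real" where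
  "lie_deriv_metric X g i j p =
     (\<Sum>k\<in>UNIV. X p $ k * partial k (\<lambda>q. g q i j) p
               + g p k j * partial i (\<lambda>q. X q $ k) p
               + g p i k * partial j (\<lambda>q. X q $ k) p)"

definition grad :: "(real^3 \<Rightarrow> 3 \<Rightarrow> 3 \<Rightarrow> real) \<Rightarrow> (real^3 \<Rightarrow> real) \<Rightarrow> real^3 \<Rightarrow> real^3" where
  "grad g f p = (\<chi> i. \<Sum>j\<in>UNIV. inv_metric g p i j * partial j f p)"

definition ricci_soliton :: "(real^3 \<Rightarrow> 3 \<Rightarrow> 3 \<Rightarrow> real) \<Rightarrow> (real^3 \<Rightarrow> real^3) \<Rightarrow> real \<Rightarrow> bool" where
  "ricci_soliton g X \<alpha> \<longleftrightarrow>
     (\<forall>p i j. 2 * ricci g i j p + lie_deriv_metric X g i j p + \<alpha> * g p i j = 0)"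

definition is_gradient_field :: "(real^3 \<Rightarrow> 3 \<Rightarrow> 3 \<Rightarrow> real) \<Rightarrow> (real^3 \<Rightarrow> real^3) \<Rightarrow> bool" where
  "is_gradient_field g X \<longleftrightarrow>
     (\<exists>f. (\<forall>p. f differentiable (at p)) \<and> (\<forall>p. X p = grad g f p))"

definition theta1 :: "real^3 \<Rightarrow> real^3" where
  "theta1 p = vector [sin (p$2), 0, cos (p$2)]"
definition theta2 :: "real^3 \<Rightarrow> real^3" where
  "theta2 p = vector [0, 1, 0]"
definition theta3 :: "real^3 \<Rightarrow> real^3" where
  "theta3 p = vector [cos (p$2), 0, - sin (p$2)]"

definition g1 :: "real^3 \<Rightarrow> 3 \<Rightarrow> 3 \<Rightarrow> real" where
  "g1 p i j = theta1 p $ i * theta1 p $ j + theta2 p $ i * theta2 p $ j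
              - theta3 p $ i * theta3 p $ j"

definition F1 :: "real^3 \<Rightarrow> real^3" where
  "F1 p = vector [sin (p$2), 0, cos (p$2)]"
definition F2 :: "real^3 \<Rightarrow> real^3" where
  "F2 p = vector [0, 1, 0]"
definition F3 :: "real^3 \<Rightarrow> real^3" where
  "F3 p = vector [cos (p$2), 0, - sin (p$2)]"

definition X1 :: "real^3 \<Rightarrow> real^3" where
  "X1 p = (2 * (p$3 * cos (p$2) + p$1 * sin (p$2))) *\<^sub>R F1 p
        + (2 * (p$1 * cos (p$2) - p$3 * sin (p$2))) *\<^sub>R F3 p"

end

theory Submission imports Defs begin

lemma partial_frechet:
  assumes "(h has_derivative h') (at p)"
  shows "partial i h p = h' (axis i 1)"
proof -
  have l: "((\<lambda>t::real. p + t *\<^sub>R axis i 1) has_derivative (\<lambda>t. t *\<^sub>R axis i 1)) (at 0)"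
    by (auto intro!: derivative_eq_intros)
  have "((\<lambda>t. h (p + t *\<^sub>R axis i 1)) has_derivative (\<lambda>t. h' (t *\<^sub>R axis i 1))) (at 0)"
    using has_derivative_compose[OF l] assms by simp
  moreover have "(\<lambda>t. h' (t *\<^sub>R axis i 1)) = (\<lambda>t. t * h' (axis i 1))"
    using assms has_derivative_bounded_linear linear_cmul bounded_linear.linear by fastforce
  ultimately have "((\<lambda>t. h (p + t *\<^sub>R axis i 1)) has_real_derivative h' (axis i 1)) (at 0)"
    by (simp add: has_field_derivative_def mult_commute_abs)
  then show ?thesis unfolding partial_def by (rule DERIV_imp_deriv)
qed

lemma partial_y:
  assumes "\<And>t. (\<phi> has_real_derivative \<phi>' t) (at t)"
  shows "partial k (\<lambda>q. \<phi> (q$2)) p = (if k = 2 then \<phi>' (p$2) else 0)"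
proof -
  have "((\<lambda>q. \<phi> (q$2)) has_derivative (\<lambda>v. \<phi>' (p$2) * v$2)) (at p)"
  proof -
    have a: "((\<lambda>q::real^3. q$2) has_derivative (\<lambda>v. v$2)) (at p)"
      by (rule bounded_linear_imp_has_derivative[OF bounded_linear_vec_nth])
    have b: "(\<phi> has_derivative (\<lambda>x. x * \<phi>' (p$2))) (at (p$2))"
      using assms by (simp add: has_field_derivative_def mult_commute_abs)
    show ?thesis using has_derivative_compose[OF a b] by (simp add: mult.commute)
  qed
  then show ?thesis by (simp add: partial_frechet axis_def)
qed

lemma partial_coord:
  "partial k (\<lambda>q. c * q$m) p = (if k = m then c else 0)"
proof -
  have "((\<lambda>q::real^3. c * q$m) has_derivative (\<lambda>v. c * v$m)) (at p)"
    by (simp add: bounded_linear_imp_has_derivative bounded_linear_mult_right bounded_linear_compose[OF bounded_linear_mult_right bounded_linear_vec_nth])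
  then show ?thesis by (simp add: partial_frechet axis_def)
qed

lemma matrix_inv_invol:
  fixes A :: "real^'n^'n"
  assumes "A ** A = mat 1"
  shows "matrix_inv A = A"
proof -
  have ex: "\<exists>B. A ** B = mat 1 \<and> B ** A = mat 1" using assms by blast
  let ?B = "matrix_inv A"
  have h: "A ** ?B = mat 1 \<and> ?B ** A = mat 1"
    unfolding matrix_inv_def using someI_ex[OF ex] .
  have "?B = ?B ** (A ** A)" using assms by simp
  also have "\<dots> = (?B ** A) ** A" by (simp add: matrix_mul_assoc)
  also have "\<dots> = A" using h by simp
  finally show ?thesis .
qed

definition G :: "real \<Rightarrow> 3 \<Rightarrow> 3 \<Rightarrow> real" where
  "G y i j = (if i=1 \<and> j=1 then - cos(2*y) else if i=2 \<and> j=2 then 1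
     else if i=3 \<and> j=3 then cos(2*y) else if (i=1 \<and> j=3) \<or> (i=3 \<and> j=1) then sin(2*y) else 0)"
definition dG :: "real \<Rightarrow> 3 \<Rightarrow> 3 \<Rightarrow> real" where
  "dG y i j = (if i=1 \<and> j=1 then 2 * sin(2*y) else if i=2 \<and> j=2 then 0
     else if i=3 \<and> j=3 then - 2 * sin(2*y) else if (i=1 \<and> j=3) \<or> (i=3 \<and> j=1) then 2 * cos(2*y) else 0)"

lemma g1_G: "g1 q i j = G (q$2) i j"
  using exhaust_3[of i] exhaust_3[of j]
  by (auto simp: g1_def G_def theta1_def theta2_def theta3_def cos_double sin_double power2_eq_square)

lemma DERIV_G: "((\<lambda>y. G y i j) has_real_derivative dG t i j) (at t)"
  using exhaust_3[of i] exhaust_3[of j]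
  by (auto simp: G_def dG_def intro!: derivative_eq_intros)

lemma partial_g1: "partial k (\<lambda>q. g1 q i j) p = (if k = 2 then dG (p$2) i j else 0)"
  unfolding g1_G by (rule partial_y[OF DERIV_G])

lemma sc1: "cos (2*y) * cos (2*y) + sin (2*y) * sin (2*y) = (1::real)"
  by (metis power2_eq_square sin_cos_squared_add add.commute)

lemma inv_g1: "inv_metric g1 p = g1 p"
proof -
  have "(\<chi> a b. g1 p a b) ** (\<chi> a b. g1 p a b) = mat 1"
    unfolding vec_eq_iff matrix_matrix_mult_def mat_def
    apply (simp add: sum_3 g1_G)
    apply (intro allI)
    subgoal for i j
      using exhaust_3[of i] exhaust_3[of j] sc1[of "p$2"]
      by (auto simp: G_def algebra_simps)
    done
  then have "matrix_inv (\<chi> a b. g1 p a b) = (\<chi> a b. g1 p a b)" by (rule matrix_inv_invol)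
  then show ?thesis by (simp add: fun_eq_iff inv_metric_def)
qed

definition Gm :: "real \<Rightarrow> 3 \<Rightarrow> 3 \<Rightarrow> 3 \<Rightarrow> real" where
  "Gm y k i j = (if k = 2 then
       (if i=1 \<and> j=1 then - sin(2*y) else if i=3 \<and> j=3 then sin(2*y)
        else if (i=1 \<and> j=3) \<or> (i=3 \<and> j=1) then - cos(2*y) else 0)
     else if k = 1 then (if (i=2 \<and> j=3) \<or> (i=3 \<and> j=2) then -1 else 0)
     else (if (i=1 \<and> j=2) \<or> (i=2 \<and> j=1) then 1 else 0))"
definition dGm :: "real \<Rightarrow> 3 \<Rightarrow> 3 \<Rightarrow> 3 \<Rightarrow> real" where
  "dGm y k i j = (if k = 2 then
       (if i=1 \<and> j=1 then - 2 * cos(2*y) else if i=3 \<and> j=3 then 2 * cos(2*y)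
        else if (i=1 \<and> j=3) \<or> (i=3 \<and> j=1) then 2 * sin(2*y) else 0)
     else 0)"


lemma G_tab:
  "G y 1 1 = - cos(2*y)"
  "G y 1 2 = 0"
  "G y 1 3 = sin(2*y)"
  "G y 2 1 = 0"
  "G y 2 2 = 1"
  "G y 2 3 = 0"
  "G y 3 1 = sin(2*y)"
  "G y 3 2 = 0"
  "G y 3 3 = cos(2*y)"
  by (simp_all add: G_def)

lemma dG_tab:
  "dG y 1 1 = 2 * sin(2*y)"
  "dG y 1 2 = 0"
  "dG y 1 3 = 2 * cos(2*y)"
  "dG y 2 1 = 0"
  "dG y 2 2 = 0"
  "dG y 2 3 = 0"
  "dG y 3 1 = 2 * cos(2*y)"
  "dG y 3 2 = 0"
  "dG y 3 3 = - 2 * sin(2*y)"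
  by (simp_all add: dG_def)

lemma Gm_tab:
  "Gm y 1 1 1 = 0"
  "Gm y 1 1 2 = 0"
  "Gm y 1 1 3 = 0"
  "Gm y 1 2 1 = 0"
  "Gm y 1 2 2 = 0"
  "Gm y 1 2 3 = -1"
  "Gm y 1 3 1 = 0"
  "Gm y 1 3 2 = -1"
  "Gm y 1 3 3 = 0"
  "Gm y 2 1 1 = - sin(2*y)"
  "Gm y 2 1 2 = 0"
  "Gm y 2 1 3 = - cos(2*y)"
  "Gm y 2 2 1 = 0"
  "Gm y 2 2 2 = 0"
  "Gm y 2 2 3 = 0"
  "Gm y 2 3 1 = - cos(2*y)"
  "Gm y 2 3 2 = 0"
  "Gm y 2 3 3 = sin(2*y)"
  "Gm y 3 1 1 = 0"
  "Gm y 3 1 2 = 1"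
  "Gm y 3 1 3 = 0"
  "Gm y 3 2 1 = 1"
  "Gm y 3 2 2 = 0"
  "Gm y 3 2 3 = 0"
  "Gm y 3 3 1 = 0"
  "Gm y 3 3 2 = 0"
  "Gm y 3 3 3 = 0"
  by (simp_all add: Gm_def)

lemma dGm_tab:
  "dGm y 1 1 1 = 0"
  "dGm y 1 1 2 = 0"
  "dGm y 1 1 3 = 0"
  "dGm y 1 2 1 = 0"
  "dGm y 1 2 2 = 0"
  "dGm y 1 2 3 = 0"
  "dGm y 1 3 1 = 0"
  "dGm y 1 3 2 = 0"
  "dGm y 1 3 3 = 0"
  "dGm y 2 1 1 = - 2 * cos(2*y)"
  "dGm y 2 1 2 = 0"
  "dGm y 2 1 3 = 2 * sin(2*y)"
  "dGm y 2 2 1 = 0"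
  "dGm y 2 2 2 = 0"
  "dGm y 2 2 3 = 0"
  "dGm y 2 3 1 = 2 * sin(2*y)"
  "dGm y 2 3 2 = 0"
  "dGm y 2 3 3 = 2 * cos(2*y)"
  "dGm y 3 1 1 = 0"
  "dGm y 3 1 2 = 0"
  "dGm y 3 1 3 = 0"
  "dGm y 3 2 1 = 0"
  "dGm y 3 2 2 = 0"
  "dGm y 3 2 3 = 0"
  "dGm y 3 3 1 = 0"
  "dGm y 3 3 2 = 0"
  "dGm y 3 3 3 = 0"
  by (simp_all add: dGm_def)

lemma all3: "(\<forall>i::3. P i) \<longleftrightarrow> P 1 \<and> P 2 \<and> P 3" by (metis exhaust_3)

lemma DERIV_Gm_all: "\<forall>k i j. ((\<lambda>y. Gm y k i j) has_real_derivative dGm t k i j) (at t)"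
  apply (simp only: all3 Gm_tab dGm_tab)
  apply (intro conjI)
  apply (auto intro!: derivative_eq_intros)
  done

lemma DERIV_Gm: "((\<lambda>y. Gm y k i j) has_real_derivative dGm t k i j) (at t)"
  using DERIV_Gm_all by blast

lemma chr_g1_all: "\<forall>k i j. christoffel g1 k i j p = Gm (p$2) k i j"
  unfolding christoffel_def inv_g1 partial_g1
  apply (simp only: all3 sum_3 g1_G)
  apply (simp add: G_tab dG_tab Gm_tab)
  using sc1[of "p$2"] by (simp add: algebra_simps; linarith)

lemma chr_g1: "christoffel g1 k i j p = Gm (p$2) k i j"
  using chr_g1_all by blast

lemma partial_chr: "partial m (christoffel g1 k i j) p = (if m = 2 then dGm (p$2) k i j else 0)"
proof -
  have "christoffel g1 k i j = (\<lambda>q. Gm (q$2) k i j)" by (simp add: fun_eq_iff chr_g1)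
  then show ?thesis by (simp add: partial_y[OF DERIV_Gm])
qed

lemma ricci_g1_all: "\<forall>i j. ricci g1 i j p = (if i = 2 \<and> j = 2 then 2 else 0)"
  unfolding ricci_def partial_chr chr_g1
  apply (simp only: all3 sum_3)
  by (simp add: Gm_tab dGm_tab)


lemma ss1: "sin y * sin y + cos y * cos y = (1::real)"
  by (metis power2_eq_square sin_cos_squared_add)
lemma X1_1: "X1 q $ 1 = 2 * q$1"
proof -
  have "X1 q $ 1 = 2 * (q$3 * cos (q$2) + q$1 * sin (q$2)) * sin (q$2) + 2 * (q$1 * cos (q$2) - q$3 * sin (q$2)) * cos (q$2)"
    by (simp add: X1_def F1_def F3_def)
  also have "\<dots> = 2 * q$1 * (sin (q$2) * sin (q$2) + cos (q$2) * cos (q$2))"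
    by algebra
  finally show ?thesis by (simp add: ss1)
qed
lemma X1_3: "X1 q $ 3 = 2 * q$3"
proof -
  have "X1 q $ 3 = 2 * (q$3 * cos (q$2) + q$1 * sin (q$2)) * cos (q$2) - 2 * (q$1 * cos (q$2) - q$3 * sin (q$2)) * sin (q$2)"
    by (simp add: X1_def F1_def F3_def)
  also have "\<dots> = 2 * q$3 * (sin (q$2) * sin (q$2) + cos (q$2) * cos (q$2))"
    by algebra
  finally show ?thesis by (simp add: ss1)
qed
lemma X1_2: "X1 q $ 2 = 0"
  by (simp add: X1_def F1_def F3_def)

lemma X1_comp: "X1 q $ k = (if k = 2 then 0 else 2) * q$k"
  using exhaust_3[of k] by (auto simp: X1_1 X1_2 X1_3)

lemma partial_X1: "partial m (\<lambda>q. X1 q $ k) p = (if m = k then (if k = 2 then 0 else 2) else 0)"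
  unfolding X1_comp partial_coord by simp

lemma soliton: "ricci_soliton g1 X1 (-4)"
  unfolding ricci_soliton_def lie_deriv_metric_def partial_X1 partial_g1
  apply (rule allI)
  subgoal for p
  apply (simp only: all3 sum_3 ricci_g1_all)
  apply (simp add: g1_G G_tab dG_tab X1_comp)
  done
  done

lemma line_deriv:
  assumes "\<forall>q. f differentiable (at q)"
  shows "((\<lambda>t. f (p + t *\<^sub>R axis i 1)) has_real_derivative partial i f (p + t *\<^sub>R axis i 1)) (at t)"
proof -
  let ?q = "p + t *\<^sub>R axis i 1"
  obtain f' where fd: "(f has_derivative f') (at ?q)"
    using assms unfolding differentiable_def by blast
  have l: "((\<lambda>s::real. p + s *\<^sub>R axis i 1) has_derivative (\<lambda>s. s *\<^sub>R axis i 1)) (at t)"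
    by (auto intro!: derivative_eq_intros)
  have "((\<lambda>s. f (p + s *\<^sub>R axis i 1)) has_derivative (\<lambda>s. f' (s *\<^sub>R axis i 1))) (at t)"
    using has_derivative_compose[OF l fd] by simp
  moreover have "(\<lambda>s. f' (s *\<^sub>R axis i 1)) = (\<lambda>s. s * f' (axis i 1))"
    using fd has_derivative_bounded_linear linear_cmul bounded_linear.linear by fastforce
  ultimately have "((\<lambda>s. f (p + s *\<^sub>R axis i 1)) has_real_derivative f' (axis i 1)) (at t)"
    by (simp add: has_field_derivative_def mult_commute_abs)
  then show ?thesis using partial_frechet[OF fd] by simp
qed

definition pt :: "real \<Rightarrow> real \<Rightarrow> real^3" where
  "pt a b = a *\<^sub>R axis 1 1 + b *\<^sub>R axis 2 1"

lemma pt_comp: "pt a b $ 1 = a" "pt a b $ 2 = b" "pt a b $ 3 = 0"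
  by (simp_all add: pt_def axis_def)

lemma pt_line1: "pt 0 b + t *\<^sub>R axis 1 1 = pt t b"
  by (simp add: pt_def)
lemma pt_line2: "pt a 0 + t *\<^sub>R axis 2 1 = pt a t"
  by (simp add: pt_def)

lemma not_grad: "\<not> is_gradient_field g1 X1"
proof
  assume "is_gradient_field g1 X1"
  then obtain f where fd: "\<forall>p. f differentiable (at p)" and gr: "\<forall>p. X1 p = grad g1 f p"
    unfolding is_gradient_field_def by blast
  have comp: "X1 p $ i = (\<Sum>j\<in>UNIV. g1 p i j * partial j f p)" for p i
    using gr by (simp add: grad_def inv_g1)
  have B: "partial 2 f p = 0" for p
    using comp[of p 2] by (simp add: sum_3 g1_G G_tab X1_comp)
  have A: "partial 1 f (pt t b) = -2 * t * cos (2*b)" for t b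
  proof -
    let ?c = "cos (2*b)" and ?s = "sin (2*b)"
    let ?w1 = "partial 1 f (pt t b)" and ?w3 = "partial 3 f (pt t b)"
    have e1: "2 * t = - ?c * ?w1 + ?s * ?w3"
      using comp[of "pt t b" 1] by (simp add: sum_3 g1_G G_tab X1_comp pt_comp)
    have e3: "0 = ?s * ?w1 + ?c * ?w3"
      using comp[of "pt t b" 3] by (simp add: sum_3 g1_G G_tab X1_comp pt_comp)
    have h1: "?c * ?c + ?s * ?s = 1" by (rule sc1)
    have "?w1 = - ?c * (- ?c * ?w1 + ?s * ?w3) + ?s * (?s * ?w1 + ?c * ?w3)"
      using h1 by algebra
    also have "\<dots> = -2 * t * ?c"
      by (simp only: e1[symmetric] e3[symmetric]) simp
    finally show ?thesis by simp
  qed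
  have C: "f (pt a b) = f (pt a 0)" for a b
  proof -
    have "\<forall>t. ((\<lambda>t. f (pt a t)) has_real_derivative 0) (at t)"
      using line_deriv[OF fd, of "pt a 0" 2] by (simp add: pt_line2 B)
    then show ?thesis by (rule DERIV_isconst_all)
  qed
  have D: "f (pt 1 b) + cos (2*b) = f (pt 0 b)" for b
  proof -
    have "\<forall>t. ((\<lambda>t. f (pt t b) + t\<^sup>2 * cos (2*b)) has_real_derivative 0) (at t)"
    proof
      fix t
      have "((\<lambda>t. f (pt t b)) has_real_derivative -2 * t * cos (2*b)) (at t)"
        using line_deriv[OF fd, of "pt 0 b" 1 t] by (simp add: pt_line1 A)
      then have "((\<lambda>t. f (pt t b) + t\<^sup>2 * cos (2*b)) has_real_derivative
          (-2 * t * cos (2*b) + 2 * t * cos (2*b))) (at t)"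
        by (auto intro!: derivative_eq_intros)
      then show "((\<lambda>t. f (pt t b) + t\<^sup>2 * cos (2*b)) has_real_derivative 0) (at t)" by simp
    qed
    from DERIV_isconst_all[OF this, of 1 0] show ?thesis by simp
  qed
  have "f (pt 1 0) + 1 = f (pt 0 0)" using D[of 0] by simp
  moreover have "f (pt 1 (pi/2)) - 1 = f (pt 0 (pi/2))" using D[of "pi/2"] by simp
  ultimately show False using C[of 1 "pi/2"] C[of 0 "pi/2"] by simp
qed

theorem theorem4p1:
  shows "ricci_soliton g1 X1 (-4) \<and> \<not> is_gradient_field g1 X1"
  using soliton not_grad by blast

end
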